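(* Let $L$ be a subspace of $\bigwedge^kV$ and $1\leq i<j\leq n$. Then $N_{j\to i}L$ is monomial with respect to $e_j$, i.e. \[ N_{j\to i}L=\Big(N_{j\to i}L\cap\bigwedge^{k}V^{(j)}\Big)\oplus\Big(N_{j\to i}L\cap\big(e_{j}\wedge\bigwedge^{k-1}V^{(j)}\big)\Big). \]
   Context: $\mathbb{F}$ is a field (assumed throughout the paper, for expository purposes, to have characteristic not $2$), $V$ is an $n$-dimensional $\mathbb{F}$-vector space with a fixed basis $e_1,\dots,e_n$, and $\bigwedge V$ its exterior algebra. For $j\in[n]$, $V^{(j)}$ is the span of $\{e_h:h\neq j\}$, and $\bigwedge V^{(j)}$ is viewed as a subalgebra of $\bigwedge V$. Slow shift: for distinct $i,j\in[n]$ and nonzero $m\in\bigwedge^kV$, write uniquely $m=x+e_j\wedge y$ with $x\in\bigwedge^kV^{(j)}$, $y\in\bigwedge^{k-1}V^{(j)}$, and set $N_{j\to i}m=x+e_i\wedge y$ if this is nonzero, and $N_{j\to i}m=e_j\wedge y$ otherwise (the limit as $t\to0$ of the projective action of the linear map $e_j\mapsto e_i+te_j$ fixing the other $e_h$). For a subspace $L$ of $\bigwedge^kV$, $N_{j\to i}L$ is the span of $\{N_{j\to i}m:m\in L\setminus\{0\}\}$; it has the same dimension as $L$. *)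

theory Defs
  imports Complex_Main "HOL-Library.Function_Algebras"
begin

text \<open>Model of the exterior algebra of V = F^n with basis e_1,...,e_n.
  An element of the k-th exterior power is a coefficient function on subsets of
  {1..n}: m S is the coefficient of e_S = e_{s_1} wedge ... wedge e_{s_k}
  (s_1 < ... < s_k).\<close>

definition scl :: "'a::field \<Rightarrow> (nat set \<Rightarrow> 'a) \<Rightarrow> (nat set \<Rightarrow> 'a)" where
  "scl c f = (\<lambda>S. c * f S)"

definition ext :: "nat \<Rightarrow> nat \<Rightarrow> (nat set \<Rightarrow> 'a::field) set" where
  "ext n k = {f. \<forall>S. f S \<noteq> 0 \<longrightarrow> S \<subseteq> {1..n} \<and> card S = k}"

text \<open>the k-th exterior power of V^(j) = span of e_h, h /= j\<close>
definition extj :: "nat \<Rightarrow> nat \<Rightarrow> nat \<Rightarrow> (nat set \<Rightarrow> 'a::field) set" where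
  "extj n j k = {f \<in> ext n k. \<forall>S. j \<in> S \<longrightarrow> f S = 0}"

text \<open>sign of e_i wedge e_T = sgn_ins i T * e_(T \<union> {i}) for i not in T\<close>
definition sgn_ins :: "nat \<Rightarrow> nat set \<Rightarrow> 'a::field" where
  "sgn_ins i T = (-1) ^ card {t \<in> T. t < i}"

text \<open>left multiplication by e_i\<close>
definition wedge_e :: "nat \<Rightarrow> (nat set \<Rightarrow> 'a::field) \<Rightarrow> (nat set \<Rightarrow> 'a)" where
  "wedge_e i y = (\<lambda>S. if i \<in> S then sgn_ins i (S - {i}) * y (S - {i}) else 0)"

definition ej_part :: "nat \<Rightarrow> nat \<Rightarrow> nat \<Rightarrow> (nat set \<Rightarrow> 'a::field) set" where
  "ej_part n j k = (if k = 0 then {0} else wedge_e j ` extj n j (k - 1))"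

text \<open>the unique decomposition m = x + e_j wedge y with x, y free of e_j\<close>
definition xpart :: "nat \<Rightarrow> (nat set \<Rightarrow> 'a::field) \<Rightarrow> (nat set \<Rightarrow> 'a)" where
  "xpart j m = (\<lambda>S. if j \<in> S then 0 else m S)"

definition ypart :: "nat \<Rightarrow> (nat set \<Rightarrow> 'a::field) \<Rightarrow> (nat set \<Rightarrow> 'a)" where
  "ypart j m = (\<lambda>T. if j \<in> T then 0 else sgn_ins j T * m (insert j T))"

definition slow_shift :: "nat \<Rightarrow> nat \<Rightarrow> (nat set \<Rightarrow> 'a::field) \<Rightarrow> (nat set \<Rightarrow> 'a)" where
  "slow_shift j i m =
     (let x = xpart j m; y = ypart j m; r = x + wedge_e i y
      in if r \<noteq> 0 then r else wedge_e j y)"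

definition slow_shift_space :: "nat \<Rightarrow> nat \<Rightarrow> (nat set \<Rightarrow> 'a::field) set \<Rightarrow> (nat set \<Rightarrow> 'a) set" where
  "slow_shift_space j i L = module.span scl (slow_shift j i ` (L - {0}))"


end

theory Submission
  imports Defs
begin

interpretation scl_mod: module "scl :: 'a::field \<Rightarrow> (nat set \<Rightarrow> 'a) \<Rightarrow> _"
  by unfold_locales (auto simp: scl_def fun_eq_iff algebra_simps)

lemma extj_subspace: "scl_mod.subspace (extj n j k :: (nat set \<Rightarrow> 'a::field) set)"
proof (rule scl_mod.subspaceI)
  show "(0::nat set \<Rightarrow> 'a) \<in> extj n j k" by (simp add: extj_def ext_def)
next
  fix x y :: "nat set \<Rightarrow> 'a"
  assume x: "x \<in> extj n j k" and y: "y \<in> extj n j k"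
  have "S \<subseteq> {1..n} \<and> card S = k" if "(x + y) S \<noteq> 0" for S
  proof -
    have "x S \<noteq> 0 \<or> y S \<noteq> 0" using that by auto
    then show ?thesis using x y unfolding extj_def ext_def by blast
  qed
  moreover have "(x + y) S = 0" if "j \<in> S" for S using x y that unfolding extj_def by simp
  ultimately show "x + y \<in> extj n j k" unfolding extj_def ext_def by blast
next
  fix c :: 'a and x :: "nat set \<Rightarrow> 'a"
  assume x: "x \<in> extj n j k"
  then show "scl c x \<in> extj n j k" unfolding extj_def ext_def scl_def by auto
qed

lemma wedge_add: "wedge_e j (y1 + y2) = wedge_e j y1 + wedge_e j y2"
  by (auto simp: wedge_e_def fun_eq_iff algebra_simps)

lemma wedge_scl: "wedge_e j (scl c y) = scl c (wedge_e j y)"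
  by (auto simp: wedge_e_def scl_def fun_eq_iff algebra_simps)

lemma wedge_zero: "wedge_e j 0 = 0"
  by (auto simp: wedge_e_def fun_eq_iff)

lemma ej_subspace: "scl_mod.subspace (ej_part n j k :: (nat set \<Rightarrow> 'a::field) set)"
proof (cases "k = 0")
  case True
  then show ?thesis unfolding ej_part_def scl_mod.subspace_def by (auto simp: scl_def fun_eq_iff)
next
  case False
  have S: "scl_mod.subspace (extj n j (k-1) :: (nat set \<Rightarrow> 'a::field) set)" by (rule extj_subspace)
  show ?thesis unfolding ej_part_def scl_mod.subspace_def using False
  proof (intro conjI ballI allI; simp)
    show "(0::nat set \<Rightarrow> 'a) \<in> wedge_e j ` extj n j (k - Suc 0)"
      using S scl_mod.subspace_0 wedge_zero by (metis One_nat_def image_eqI)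
  next
    fix x y :: "nat set \<Rightarrow> 'a"
    assume "x \<in> wedge_e j ` extj n j (k - Suc 0)" "y \<in> wedge_e j ` extj n j (k - Suc 0)"
    then obtain u v where "u \<in> extj n j (k-1)" "v \<in> extj n j (k-1)" "x = wedge_e j u" "y = wedge_e j v"
      by auto
    then show "x + y \<in> wedge_e j ` extj n j (k - Suc 0)"
      using S scl_mod.subspace_add wedge_add by (metis One_nat_def image_eqI)
  next
    fix c :: 'a and x :: "nat set \<Rightarrow> 'a"
    assume "x \<in> wedge_e j ` extj n j (k - Suc 0)"
    then obtain u where "u \<in> extj n j (k-1)" "x = wedge_e j u" by auto
    then show "scl c x \<in> wedge_e j ` extj n j (k - Suc 0)"
      using S scl_mod.subspace_scale wedge_scl by (metis One_nat_def image_eqI)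
  qed
qed

lemma extj_ej_inter: "extj n j k \<inter> ej_part n j k = {0 :: nat set \<Rightarrow> 'a::field}"
proof
  show "{0} \<subseteq> extj n j k \<inter> ej_part n j k"
    using extj_subspace[of n j k] ej_subspace[of n j k] scl_mod.subspace_0 by auto
next
  show "extj n j k \<inter> ej_part n j k \<subseteq> {0 :: nat set \<Rightarrow> 'a}"
  proof
    fix f :: "nat set \<Rightarrow> 'a" assume f: "f \<in> extj n j k \<inter> ej_part n j k"
    have "f S = 0" for S
    proof (cases "j \<in> S")
      case True then show ?thesis using f by (auto simp: extj_def)
    next
      case False then show ?thesis using f
        by (auto simp: ej_part_def wedge_e_def split: if_splits)
    qed
    then show "f \<in> {0}" by (auto simp: fun_eq_iff)
  qed
qed

lemma shift_in:
  fixes m :: "nat set \<Rightarrow> 'a::field"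
  assumes m: "m \<in> ext n k" and ij: "1 \<le> i" "i \<le> n" "i \<noteq> j"
  shows "xpart j m + wedge_e i (ypart j m) \<in> extj n j k"
    and "wedge_e j (ypart j m) \<in> ej_part n j k"
proof -
  have mE: "m S \<noteq> 0 \<Longrightarrow> S \<subseteq> {1..n} \<and> card S = k" for S
    using m by (simp add: ext_def)
  have Y2: "j \<notin> T \<and> T \<subseteq> {1..n} \<and> card T = k - 1 \<and> k \<ge> 1" if yn: "ypart j m T \<noteq> 0" for T
  proof -
    have jT: "j \<notin> T" using yn unfolding ypart_def by (cases "j \<in> T") simp_all
    have "m (insert j T) \<noteq> 0" using yn jT unfolding ypart_def by simp
    then have A0: "insert j T \<subseteq> {1..n} \<and> card (insert j T) = k" by (rule mE)
    have A: "insert j T \<subseteq> {1..n}" "card (insert j T) = k" using A0 by (rule conjunct1, rule conjunct2)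
    have fT: "finite T" using A(1) by (meson finite_atLeastAtMost finite_subset subset_insertI2 subset_refl)
    have "card (insert j T) = Suc (card T)" using fT jT by (rule card_insert_disjoint)
    then show ?thesis using A jT by simp
  qed
  have P1: "\<forall>S. (xpart j m + wedge_e i (ypart j m)) S \<noteq> 0 \<longrightarrow> S \<subseteq> {1..n} \<and> card S = k"
  proof (intro allI impI)
    fix S assume ne: "(xpart j m + wedge_e i (ypart j m)) S \<noteq> 0"
    show "S \<subseteq> {1..n} \<and> card S = k"
    proof (cases "xpart j m S \<noteq> 0")
      case True
      then have "m S \<noteq> 0" unfolding xpart_def by presburger
      then show ?thesis by (rule mE)
    next
      case False
      then have w: "wedge_e i (ypart j m) S \<noteq> 0" using ne by simp
      have iS: "i \<in> S" using w unfolding wedge_e_def by presburger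
      have yn: "ypart j m (S - {i}) \<noteq> 0" using w iS unfolding wedge_e_def by simp
      from Y2[OF yn] have A: "S - {i} \<subseteq> {1..n}" "card (S - {i}) = k - 1" "k \<ge> 1" by auto
      have fS: "finite (S - {i})" using A(1) by (meson finite_atLeastAtMost finite_subset)
      have "card (insert i (S - {i})) = Suc (card (S - {i}))"
        using fS by (rule card_insert_disjoint) simp
      moreover have "insert i (S - {i}) = S" using iS by blast
      ultimately have "card S = Suc (card (S - {i}))" by simp
      then show ?thesis using A iS ij by auto
    qed
  qed
  have P2: "\<forall>S. j \<in> S \<longrightarrow> (xpart j m + wedge_e i (ypart j m)) S = 0"
  proof (intro allI impI)
    fix S assume jS: "j \<in> S"
    have "xpart j m S = 0" using jS unfolding xpart_def by simp
    moreover have "wedge_e i (ypart j m) S = 0"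
    proof (cases "i \<in> S")
      case True
      have "j \<in> S - {i}" using jS ij by blast
      then have "ypart j m (S - {i}) = 0" unfolding ypart_def by simp
      then show ?thesis unfolding wedge_e_def by simp
    next
      case False then show ?thesis unfolding wedge_e_def by simp
    qed
    ultimately show "(xpart j m + wedge_e i (ypart j m)) S = 0" by simp
  qed
  from P1 P2 show "xpart j m + wedge_e i (ypart j m) \<in> extj n j k"
    unfolding extj_def ext_def by (intro CollectI conjI)
  show "wedge_e j (ypart j m) \<in> ej_part n j k"
  proof (cases "k = 0")
    case True
    have "ypart j m T = 0" for T using Y2[of T] True by linarith
    then have "ypart j m = 0" by (simp add: fun_eq_iff)
    then show ?thesis using True by (simp add: ej_part_def wedge_zero)
  next
    case False
    have Q1: "\<forall>S. ypart j m S \<noteq> 0 \<longrightarrow> S \<subseteq> {1..n} \<and> card S = k - 1"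
    proof (intro allI impI)
      fix S assume "ypart j m S \<noteq> 0"
      from Y2[OF this] show "S \<subseteq> {1..n} \<and> card S = k - 1" by (intro conjI) (elim conjE, assumption)+
    qed
    have Q2: "\<forall>S. j \<in> S \<longrightarrow> ypart j m S = 0"
      unfolding ypart_def by simp
    have "ypart j m \<in> extj n j (k-1)"
      using Q1 Q2 unfolding extj_def ext_def by (intro CollectI conjI)
    then show ?thesis using False by (simp add: ej_part_def)
  qed
qed

lemma shift_cases:
  fixes m :: "nat set \<Rightarrow> 'a::field"
  assumes m: "m \<in> ext n k" and ij: "1 \<le> i" "i \<le> n" "i \<noteq> j"
  shows "slow_shift j i m \<in> extj n j k \<union> ej_part n j k"
  using shift_in[OF assms] by (auto simp: slow_shift_def Let_def)

theorem lemma3p3: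
  fixes L :: "(nat set \<Rightarrow> 'a::field) set" and n k i j :: nat
  assumes char_not_2: "(2::'a) \<noteq> 0"
    and subsp: "module.subspace scl L"
    and L_sub: "L \<subseteq> ext n k"
    and ij: "1 \<le> i" "i < j" "j \<le> n"
  shows "slow_shift_space j i L =
           {a + b | a b. a \<in> slow_shift_space j i L \<inter> extj n j k
                      \<and> b \<in> slow_shift_space j i L \<inter> ej_part n j k}
         \<and> slow_shift_space j i L \<inter> extj n j k \<inter> ej_part n j k = {0}"
proof -
  define G where "G = slow_shift j i ` (L - {0})"
  define G1 where "G1 = G \<inter> extj n j k"
  define G2 where "G2 = G \<inter> ej_part n j k"
  define W where "W = slow_shift_space j i L"
  have W: "W = scl_mod.span G" unfolding W_def G_def slow_shift_space_def by simp
  have GU: "G = G1 \<union> G2"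
    using shift_cases[of _ n k i j] L_sub ij unfolding G1_def G2_def G_def by fastforce
  have WS: "scl_mod.subspace W" using W by simp
  have s1: "scl_mod.span G1 \<subseteq> W \<inter> extj n j k"
    by (rule scl_mod.span_minimal) (auto simp: G1_def W scl_mod.span_base extj_subspace scl_mod.subspace_inter)
  have s2: "scl_mod.span G2 \<subseteq> W \<inter> ej_part n j k"
    by (rule scl_mod.span_minimal) (auto simp: G2_def W scl_mod.span_base ej_subspace scl_mod.subspace_inter)
  have eq: "W = {a + b | a b. a \<in> W \<inter> extj n j k \<and> b \<in> W \<inter> ej_part n j k}"
  proof
    show "W \<subseteq> {a + b | a b. a \<in> W \<inter> extj n j k \<and> b \<in> W \<inter> ej_part n j k}"
      using s1 s2 unfolding W GU scl_mod.span_Un by blast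
    show "{a + b | a b. a \<in> W \<inter> extj n j k \<and> b \<in> W \<inter> ej_part n j k} \<subseteq> W"
      using WS scl_mod.subspace_add by blast
  qed
  have "W \<inter> extj n j k \<inter> ej_part n j k = {0}"
    using extj_ej_inter[of n j k] WS scl_mod.subspace_0 by blast
  with eq show ?thesis unfolding W_def by simp
qed

end
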